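(* Let $f$ be the density on $\mathbb{R}$ given, for some $k_1,k_2>0$, by $$\log f(x)=\begin{cases}-\frac{x^2}{2}-c, & -k_1\le x\le k_2,\\ k_1x+\frac{k_1^2}{2}-c, & x<-k_1,\\ -k_2x+\frac{k_2^2}{2}-c,& x>k_2,\end{cases}$$ with $c=c(k_1,k_2)$ chosen so that $\int f=1$, and let $F$ be its distribution function. For $\alpha,\beta\in(0,1)$ with $\alpha+\beta<1$ define $$\sigma^2(\alpha,\beta)=\frac{1}{(1-\alpha-\beta)^2}\int_\alpha^{1-\beta}\!\int_\alpha^{1-\beta}\frac{\min(s,t)-st}{f(F^{-1}(s))f(F^{-1}(t))}\,ds\,dt.$$ Then $\sigma^2(\alpha,\beta)$ is strictly convex in a neighborhood of $(\alpha,\beta)=(F(-k_1),\,1-F(k_2))$. *)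

theory Defs
  imports "HOL-Analysis.Analysis"
begin

text \<open>Unnormalised log-density (Huber-type, asymmetric): the paper's log f without the constant c.\<close>
definition logf0 :: "real \<Rightarrow> real \<Rightarrow> real \<Rightarrow> real" where
  "logf0 k1 k2 x =
     (if x < - k1 then k1 * x + k1^2 / 2
      else if x > k2 then - k2 * x + k2^2 / 2
      else - (x^2) / 2)"

definition cnorm :: "real \<Rightarrow> real \<Rightarrow> real" where
  "cnorm k1 k2 = (THE c. ((\<lambda>x. exp (logf0 k1 k2 x - c)) has_integral 1) UNIV)"

definition dens :: "real \<Rightarrow> real \<Rightarrow> real \<Rightarrow> real" where
  "dens k1 k2 x = exp (logf0 k1 k2 x - cnorm k1 k2)"

definition cdf :: "real \<Rightarrow> real \<Rightarrow> real \<Rightarrow> real" where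
  "cdf k1 k2 x = integral {..x} (dens k1 k2)"

text \<open>Quantile function F^{-1} (generalised inverse; F is a bijection onto (0,1) here).\<close>
definition qf :: "real \<Rightarrow> real \<Rightarrow> real \<Rightarrow> real" where
  "qf k1 k2 s = Inf {x. s \<le> cdf k1 k2 x}"

definition sigma2 :: "real \<Rightarrow> real \<Rightarrow> real \<Rightarrow> real \<Rightarrow> real" where
  "sigma2 k1 k2 a b =
     1 / (1 - a - b)^2 *
     integral {a..1-b} (\<lambda>t. integral {a..1-b} (\<lambda>s.
        (min s t - s * t) / (dens k1 k2 (qf k1 k2 s) * dens k1 k2 (qf k1 k2 t))))"

definition strict_convex_on :: "'a::real_vector set \<Rightarrow> ('a \<Rightarrow> real) \<Rightarrow> bool" where
  "strict_convex_on S g \<longleftrightarrow> convex S \<and>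
    (\<forall>x\<in>S. \<forall>y\<in>S. x \<noteq> y \<longrightarrow> (\<forall>u. 0 < u \<and> u < 1 \<longrightarrow>
       g (u *\<^sub>R x + (1 - u) *\<^sub>R y) < u * g x + (1 - u) * g y))"

end

theory Submission
  imports Defs
begin

lemma maxsq_deriv: "((\<lambda>t::real. (max 0 t)^2) has_real_derivative 2 * max 0 t) (at t)"
proof (cases "t = 0")
  case True
  have "((\<lambda>y::real. max 0 y) \<longlongrightarrow> max 0 0) (at 0)"
    by (intro tendsto_intros)
  then have lim: "((\<lambda>y::real. max 0 y) \<longlongrightarrow> 0) (at 0)" by simp
  have ev: "\<forall>\<^sub>F y in at (0::real). max 0 y = ((max 0 y)^2 - (max 0 0)^2) / (y - 0)"
    by (rule eventually_at_filter[THEN iffD2], rule always_eventually) (auto simp: max_def power2_eq_square divide_simps)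
  have "((\<lambda>y. ((max 0 y)^2 - (max 0 (0::real))^2) / (y - 0)) \<longlongrightarrow> 0) (at 0)"
    using tendsto_cong[OF ev] lim by simp
  then show ?thesis using True by (simp add: has_field_derivative_iff)
next
  case False
  show ?thesis
  proof (cases "t < 0")
    case True
    have "((\<lambda>t::real. 0) has_real_derivative 2 * max 0 t) (at t)" using True by simp
    then show ?thesis
      by (rule has_field_derivative_transform_within_open[where S="{..<0}"]) (use True in auto)
  next
    case F2: False
    with False have "t > 0" by simp
    have "((\<lambda>t::real. t^2) has_real_derivative 2 * max 0 t) (at t)"
      using \<open>t>0\<close> by (auto intro!: derivative_eq_intros)
    then show ?thesis
      by (rule has_field_derivative_transform_within_open[where S="{0<..}"]) (use \<open>t>0\<close> in auto)
  qed
qed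

lemma maxsq_chain [derivative_intros]:
  "(g has_real_derivative g') (at x) \<Longrightarrow> ((\<lambda>x. (max 0 (g x))^2) has_real_derivative 2 * max 0 (g x) * g') (at x)"
  using DERIV_chain2[OF maxsq_deriv] by blast

lemma maxsq_chain_eq:
  "(g has_real_derivative g') (at x) \<Longrightarrow> D = 2 * max 0 (g x) * g' \<Longrightarrow> ((\<lambda>x. (max 0 (g x))^2) has_real_derivative D) (at x)"
  using DERIV_chain2[OF maxsq_deriv] by blast

locale huber =
  fixes k1 k2 :: real
  assumes k1: "k1 > 0" and k2: "k2 > 0"
begin

definition dl :: "real \<Rightarrow> real" where
  "dl x = k1 - max 0 (x + k1) + max 0 (x - k2)"

lemma logf0_alt: "logf0 k1 k2 x = k1 * x + k1^2/2 - (max 0 (x + k1))^2 / 2 + (max 0 (x - k2))^2 / 2"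
  using k1 k2 by (auto simp: logf0_def max_def power2_eq_square field_simps)

lemma logf0_deriv: "((logf0 k1 k2) has_real_derivative dl x) (at x)"
proof -
  have "((\<lambda>x. k1 * x + k1^2/2 - (max 0 (x + k1))^2 / 2 + (max 0 (x - k2))^2 / 2)
      has_real_derivative dl x) (at x)"
    unfolding dl_def by (auto intro!: derivative_eq_intros maxsq_chain_eq)
  then show ?thesis by (simp add: logf0_alt[abs_def])
qed

end

context huber begin
definition g0 :: "real \<Rightarrow> real" where "g0 x = exp (logf0 k1 k2 x)"

lemma g0_pos: "g0 x > 0" by (simp add: g0_def)

lemma cont_logf0: "continuous_on S (logf0 k1 k2)"
  using logf0_deriv by (meson DERIV_isCont continuous_at_imp_continuous_on)

lemma cont_g0: "continuous_on S g0"
  unfolding g0_def by (intro continuous_intros cont_logf0)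

lemma g0_right: "x \<ge> k2 \<Longrightarrow> g0 x = exp (k2^2/2) * exp (- k2 * x)"
  using k1 k2 by (auto simp: g0_def logf0_def power2_eq_square mult_exp_exp)

lemma g0_left: "x \<le> -k1 \<Longrightarrow> g0 x = exp (k1^2/2) * exp (k1 * x)"
  using k1 k2 by (auto simp: g0_def logf0_def power2_eq_square mult_exp_exp)

lemma tailR: assumes "c \<ge> k2" shows "(g0 has_integral g0 c / k2) {c..}"
proof -
  have "((\<lambda>x. exp (-k2*x)) has_integral exp (-k2*c)/k2) {c..}"
    using has_integral_exp_minus_to_infinity[of k2 c] k2 by simp
  then have h: "((\<lambda>x. exp (k2^2/2) * exp (-k2*x)) has_integral exp (k2^2/2) * (exp (-k2*c)/k2)) {c..}"
    by (rule has_integral_mult_right)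
  have e: "exp (k2^2/2) * (exp (-k2*c)/k2) = g0 c / k2"
    using g0_right[OF assms] by simp
  have ee: "x \<in> {c..} \<Longrightarrow> exp (k2^2/2) * exp (-k2*x) = g0 x" for x
    using g0_right[of x] assms by simp
  show ?thesis using has_integral_eq[OF ee h] unfolding e .
qed

lemma tailL: assumes "c \<le> -k1" shows "(g0 has_integral g0 c / k1) {..c}"
proof -
  have "((\<lambda>x. exp (-k1*x)) has_integral exp (-k1*(-c))/k1) {-c..}"
    using has_integral_exp_minus_to_infinity[of k1 "-c"] k1 by simp
  then have h: "((\<lambda>x. exp (k1^2/2) * exp (-k1*x)) has_integral exp (k1^2/2) * (exp (-k1*(-c))/k1)) {-c..}"
    by (rule has_integral_mult_right)
  have e: "exp (k1^2/2) * (exp (-k1*(-c))/k1) = g0 c / k1"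
    using g0_left[OF assms] by simp
  have ee: "x \<in> {-c..} \<Longrightarrow> exp (k1^2/2) * exp (-k1*x) = g0 (-x)" for x
    using g0_left[of "-x"] assms by simp
  have h2: "((\<lambda>y. g0 (-y)) has_integral g0 c / k1) {-c..}" using has_integral_eq[OF ee h] unfolding e .
  have "(\<lambda>y. g0 (-y)) absolutely_integrable_on {-c..}"
    by (rule nonnegative_absolutely_integrable_1) (use h2 g0_pos less_imp_le in auto)
  moreover have "integral {-c..} (\<lambda>y. g0 (-y)) = g0 c / k1" using h2 by (rule integral_unique)
  moreover have "uminus ` {..c} \<subseteq> {-c..}" "uminus ` {-c..} \<subseteq> {..c}" by auto
  moreover have "{..c} \<in> sets lebesgue" by simp
  ultimately have "(\<lambda>x. g0 (- (- x))) absolutely_integrable_on {..c} \<and> integral {..c} (\<lambda>x. g0 (-(-x))) = g0 c / k1"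
    using has_absolute_integral_reflect_real[of "{..c}" "{-c..}" "\<lambda>y. g0 (-y)" "g0 c / k1"]
    by blast
  then have "g0 integrable_on {..c}" "integral {..c} g0 = g0 c / k1"
    by (auto simp: absolutely_integrable_on_def)
  then show ?thesis using integrable_integral by metis
qed

end

context huber begin

definition M0 :: real where "M0 = integral {-k1..k2} g0"
definition Zt :: real where "Zt = g0 (-k1) / k1 + M0 + g0 k2 / k2"

lemma g0_mid: "(g0 has_integral M0) {-k1..k2}"
  unfolding M0_def by (intro integrable_integral integrable_continuous_interval cont_g0)

lemma g0_UNIV: "(g0 has_integral Zt) UNIV"
proof -
  have A: "(g0 has_integral g0 (-k1) / k1) {..-k1}" by (rule tailL) simp
  have C: "(g0 has_integral g0 k2 / k2) {k2..}" by (rule tailR) simp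
  have AB: "(g0 has_integral (g0 (-k1) / k1 + M0)) ({..-k1} \<union> {-k1..k2})"
    by (rule has_integral_Un[OF A g0_mid], rule negligible_subset[OF negligible_sing[of "-k1"]]) auto
  have "(g0 has_integral (g0 (-k1) / k1 + M0 + g0 k2 / k2)) (({..-k1} \<union> {-k1..k2}) \<union> {k2..})"
    by (rule has_integral_Un[OF AB C], rule negligible_subset[OF negligible_sing[of "k2"]]) (use k1 k2 in auto)
  moreover have "({..-k1} \<union> {-k1..k2}) \<union> {k2..} = UNIV" using k1 k2 by auto
  ultimately show ?thesis by (simp add: Zt_def)
qed

lemma M0_pos: "M0 > 0"
proof -
  have nn: "\<And>x. x \<in> {-k1..k2} \<Longrightarrow> 0 \<le> g0 x" using g0_pos less_imp_le by blast
  have lt: "-k1 < k2" using k1 k2 by simp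
  have ge: "M0 \<ge> 0" by (rule has_integral_nonneg[OF g0_mid]) (use nn in blast)
  have iff: "integral {-k1..k2} g0 = 0 \<longleftrightarrow> (\<forall>x\<in>{-k1..k2}. g0 x = 0)"
    by (rule integral_eq_0_iff[OF cont_g0 lt nn])
  have "k2 \<in> {-k1..k2}" using lt by simp
  then have "M0 \<noteq> 0" using iff g0_pos[of k2] unfolding M0_def by auto
  with ge show ?thesis by simp
qed

lemma Zt_pos: "Zt > 0"
proof -
  have "g0 (-k1) / k1 > 0" using g0_pos k1 by simp
  moreover have "g0 k2 / k2 > 0" using g0_pos k2 by simp
  ultimately show ?thesis unfolding Zt_def using M0_pos by linarith
qed

lemma cnorm_eq: "cnorm k1 k2 = ln Zt"
  unfolding cnorm_def
proof (rule the_equality)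
  have h: "((\<lambda>x. g0 x * (1 / Zt)) has_integral Zt * (1 / Zt)) UNIV"
    by (rule has_integral_mult_left[OF g0_UNIV])
  have e: "\<And>x. g0 x * (1 / Zt) = exp (logf0 k1 k2 x - ln Zt)"
    using Zt_pos by (simp add: exp_diff g0_def)
  have "Zt * (1 / Zt) = 1" using Zt_pos by simp
  with h show "((\<lambda>x. exp (logf0 k1 k2 x - ln Zt)) has_integral 1) UNIV"
    unfolding e by simp
next
  fix c assume h: "((\<lambda>x. exp (logf0 k1 k2 x - c)) has_integral 1) UNIV"
  have h2: "((\<lambda>x. g0 x * exp (- c)) has_integral Zt * exp (- c)) UNIV"
    by (rule has_integral_mult_left[OF g0_UNIV])
  have e: "\<And>x. g0 x * exp (- c) = exp (logf0 k1 k2 x - c)"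
    by (simp add: g0_def exp_diff exp_minus divide_inverse)
  have "Zt * exp (- c) = 1"
    using has_integral_unique[OF h2[unfolded e] h] .
  then have "exp c = Zt" by (simp add: exp_minus divide_inverse) (metis exp_gt_zero mult.commute nonzero_mult_div_cancel_left divide_inverse less_irrefl mult_1_right)
  then show "c = ln Zt" by (metis ln_exp)
qed

lemma dens_eq: "dens k1 k2 x = g0 x / Zt"
  unfolding dens_def cnorm_eq using Zt_pos by (simp add: exp_diff g0_def)

end

context huber begin

abbreviation "F \<equiv> cdf k1 k2"
abbreviation "f \<equiv> dens k1 k2"
abbreviation "Q \<equiv> qf k1 k2"

lemma dens_fun: "f = (\<lambda>x. g0 x * (1 / Zt))"
  by (rule ext) (simp add: dens_eq)

lemma dens_pos: "f x > 0" using dens_eq g0_pos Zt_pos by simp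

lemma dens_deriv: "(f has_real_derivative f x * dl x) (at x)"
proof -
  have "((\<lambda>x. exp (logf0 k1 k2 x - cnorm k1 k2)) has_real_derivative exp (logf0 k1 k2 x - cnorm k1 k2) * (dl x - 0)) (at x)"
    by (intro derivative_intros logf0_deriv)
  then show ?thesis by (simp add: dens_def[abs_def])
qed

lemma cont_dens: "continuous_on S f"
  using dens_deriv by (meson DERIV_isCont continuous_at_imp_continuous_on)

lemma isCont_dens: "isCont f x"
  using dens_deriv by (meson DERIV_isCont)

definition Fx :: "real \<Rightarrow> real" where
  "Fx x = (if x \<le> -k1 then f x / k1 else f (-k1) / k1 + integral {-k1..x} f)"

lemma dens_tailL: "c \<le> -k1 \<Longrightarrow> (f has_integral f c / k1) {..c}"
  using has_integral_mult_left[OF tailL, of c "1/Zt"] by (simp add: dens_fun mult.commute)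

lemma dens_tailR: "c \<ge> k2 \<Longrightarrow> (f has_integral f c / k2) {c..}"
  using has_integral_mult_left[OF tailR, of c "1/Zt"] by (simp add: dens_fun mult.commute)

lemma dens_UNIV: "(f has_integral 1) UNIV"
  using has_integral_mult_left[OF g0_UNIV, of "1/Zt"] Zt_pos by (simp add: dens_fun)

lemma dens_int_interval: "(f has_integral integral {a..b} f) {a..b}"
  by (intro integrable_integral integrable_continuous_interval cont_dens)

lemma dens_has_Fx: "(f has_integral Fx x) {..x}"
proof (cases "x \<le> -k1")
  case True
  then show ?thesis using dens_tailL[OF True] by (simp add: Fx_def)
next
  case False
  have "(f has_integral (f (-k1) / k1 + integral {-k1..x} f)) ({..-k1} \<union> {-k1..x})"
    by (rule has_integral_Un[OF dens_tailL[of "-k1"] dens_int_interval],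
        simp, rule negligible_subset[OF negligible_sing[of "-k1"]]) auto
  moreover have "{..-k1} \<union> {-k1..x} = {..x}" using False by auto
  ultimately show ?thesis using False by (simp add: Fx_def)
qed

lemma cdf_eq: "F x = Fx x"
  unfolding cdf_def using dens_has_Fx by (rule integral_unique)

lemma cdf_has: "(f has_integral F x) {..x}"
  using dens_has_Fx cdf_eq by simp

lemma cdf_split: assumes "x \<le> y" shows "F y = F x + integral {x..y} f"
proof -
  have "(f has_integral (F x + integral {x..y} f)) ({..x} \<union> {x..y})"
    by (rule has_integral_Un[OF cdf_has dens_int_interval],
        rule negligible_subset[OF negligible_sing[of "x"]]) auto
  moreover have "{..x} \<union> {x..y} = {..y}" using assms by auto
  ultimately have "(f has_integral (F x + integral {x..y} f)) {..y}" by simp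
  then show ?thesis using cdf_has[of y] has_integral_unique by blast
qed

lemma dens_integral_pos: assumes "x < y" shows "integral {x..y} f > 0"
proof -
  have nn: "\<And>z. z \<in> {x..y} \<Longrightarrow> 0 \<le> f z" using dens_pos less_imp_le by blast
  have ge: "integral {x..y} f \<ge> 0" by (rule has_integral_nonneg[OF dens_int_interval]) (use nn in blast)
  have iff: "integral {x..y} f = 0 \<longleftrightarrow> (\<forall>z\<in>{x..y}. f z = 0)"
    by (rule integral_eq_0_iff[OF cont_dens assms nn])
  have "y \<in> {x..y}" using assms by simp
  then have "integral {x..y} f \<noteq> 0" using iff dens_pos[of y] by auto
  with ge show ?thesis by simp
qed

lemma cdf_less: "x < y \<Longrightarrow> F x < F y"
  using cdf_split[of x y] dens_integral_pos[of x y] by simp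

lemma cdf_le_iff: "F x \<le> F y \<longleftrightarrow> x \<le> y"
  using cdf_less[of x y] cdf_less[of y x] by (smt (verit))

lemma cdf_deriv: "(F has_real_derivative f x) (at x)"
proof -
  define c where "c = x - 1"
  define d where "d = x + 1"
  have "((\<lambda>y. integral {c..y} f) has_real_derivative f x) (at x within {c..d})"
    by (rule integral_has_real_derivative[OF cont_dens]) (simp add: c_def d_def)
  moreover have "x \<in> interior {c..d}" by (simp add: c_def d_def)
  ultimately have h: "((\<lambda>y. integral {c..y} f) has_real_derivative f x) (at x)"
    by (metis at_within_interior)
  have "((\<lambda>y. F c + integral {c..y} f) has_real_derivative 0 + f x) (at x)"
    by (rule DERIV_add[OF DERIV_const h])
  then have h2: "((\<lambda>y. F c + integral {c..y} f) has_real_derivative f x) (at x)" by simp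
  have e: "F c + integral {c..y} f = F y" if "y \<in> {c<..}" for y
    using cdf_split[of c y] that by simp
  show ?thesis
    by (rule has_field_derivative_transform_within_open[OF h2, where S="{c<..}"]) (use e in \<open>auto simp: c_def\<close>)
qed

lemma isCont_cdf: "isCont F x"
  using cdf_deriv by (rule DERIV_isCont)

lemma cdf_m1: "F (-k1) = f (-k1) / k1"
  using cdf_eq by (simp add: Fx_def)

lemma cdf_k2: "1 - F k2 = f k2 / k2"
proof -
  have "(f has_integral (F k2 + f k2 / k2)) ({..k2} \<union> {k2..})"
    by (rule has_integral_Un[OF cdf_has dens_tailR],
        simp, rule negligible_subset[OF negligible_sing[of "k2"]]) auto
  moreover have "{..k2} \<union> {k2..} = (UNIV::real set)" by auto
  ultimately have h: "(f has_integral (F k2 + f k2 / k2)) UNIV" by simp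
  have "F k2 + f k2 / k2 = 1" using has_integral_unique[OF h dens_UNIV] .
  then show ?thesis by simp
qed

lemma qf_cdf: "Q (F x) = x"
proof -
  have "{y. F x \<le> F y} = {x..}" using cdf_le_iff by auto
  then show ?thesis unfolding qf_def by simp
qed

lemma cdf_surj: assumes "F a \<le> s" "s \<le> F b" shows "\<exists>x. a \<le> x \<and> x \<le> b \<and> F x = s"
proof -
  have "a \<le> b" using assms cdf_le_iff by (meson order_trans)
  then show ?thesis using IVT[of F a s b] assms isCont_cdf by blast
qed

lemma cdf_qf: assumes "F a \<le> s" "s \<le> F b" shows "F (Q s) = s"
  using cdf_surj[OF assms] qf_cdf by auto

lemma qf_deriv: "(Q has_real_derivative 1 / f x) (at (F x))"
proof -
  have cont: "isCont Q (F x)"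
    by (rule isCont_inverse_function2[where a="x - 1" and b="x+1"]) (auto simp: qf_cdf isCont_cdf)
  have s1: "F (x-1) < F x" "F x < F (x+1)" by (auto intro: cdf_less)
  have inj: "\<And>y. F (x-1) < y \<Longrightarrow> y < F (x+1) \<Longrightarrow> F (Q y) = y"
    by (rule cdf_qf[of "x-1" _ "x+1"]) auto
  have der: "(F has_real_derivative f x) (at (Q (F x)))" using cdf_deriv[of x] by (simp add: qf_cdf)
  have "(Q has_real_derivative inverse (f x)) (at (F x))"
    by (rule DERIV_inverse_function[OF der _ s1 inj cont]) (use dens_pos[of x] in simp)
  then show ?thesis by (simp add: divide_inverse)
qed

end

context huber begin

definition w :: "real \<Rightarrow> real" where "w s = 1 / f (Q s)"
definition wd :: "real \<Rightarrow> real" where "wd s = - dl (Q s) * (w s)^2"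
definition s0 :: real where "s0 = F (-k1-1)"
definition s1 :: real where "s1 = F (k2+1)"

lemma s0s1: "s0 < s1" unfolding s0_def s1_def using k1 k2 by (intro cdf_less) simp

lemma w_F: "w (F x) = 1 / f x" by (simp add: w_def qf_cdf)

lemma w_pos: "w s > 0" using dens_pos by (simp add: w_def)

lemma in_rangeE:
  assumes "s0 \<le> s" "s \<le> s1"
  obtains x where "s = F x" "-k1-1 \<le> x" "x \<le> k2+1"
  using cdf_surj[of "-k1-1" s "k2+1"] assms unfolding s0_def s1_def by auto

lemma isCont_dl: "isCont dl x"
  unfolding dl_def by (intro continuous_intros)

lemma w_deriv_F: "(w has_real_derivative wd (F x)) (at (F x))"
proof -
  have dQ: "(Q has_real_derivative 1 / f x) (at (F x))" by (rule qf_deriv)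
  have df: "(f has_real_derivative f x * dl x) (at (Q (F x)))"
    using dens_deriv[of x] by (simp add: qf_cdf)
  have "((\<lambda>s. f (Q s)) has_real_derivative (f x * dl x) * (1 / f x)) (at (F x))"
    by (rule DERIV_chain2[OF df dQ])
  then have "((\<lambda>s. inverse (f (Q s))) has_real_derivative - (((f x * dl x) * (1 / f x)) * inverse (f (Q (F x)) ^ Suc (Suc 0)))) (at (F x))"
    by (rule DERIV_inverse_fun) (use dens_pos[of "Q (F x)"] in simp)
  moreover have "- (((f x * dl x) * (1 / f x)) * inverse (f (Q (F x)) ^ Suc (Suc 0))) = wd (F x)"
    using dens_pos[of x] by (simp add: wd_def w_F qf_cdf field_simps power2_eq_square)
  moreover have "(\<lambda>s. inverse (f (Q s))) = w" by (rule ext) (simp add: w_def inverse_eq_divide)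
  ultimately show ?thesis by simp
qed

lemma w_deriv: "s0 \<le> s \<Longrightarrow> s \<le> s1 \<Longrightarrow> (w has_real_derivative wd s) (at s)"
  by (erule in_rangeE, assumption) (simp add: w_deriv_F)

lemma isCont_Q: "s0 \<le> s \<Longrightarrow> s \<le> s1 \<Longrightarrow> isCont Q s"
  by (erule in_rangeE, assumption) (use qf_deriv DERIV_isCont in blast)

lemma isCont_w: "s0 \<le> s \<Longrightarrow> s \<le> s1 \<Longrightarrow> isCont w s"
  using w_deriv DERIV_isCont by blast

lemma isCont_wd: assumes "s0 \<le> s" "s \<le> s1" shows "isCont wd s"
proof -
  have "isCont (\<lambda>s. dl (Q s)) s" by (rule isCont_o2[OF isCont_Q[OF assms] isCont_dl])
  then show ?thesis unfolding wd_def[abs_def] using isCont_w[OF assms] by (intro continuous_intros)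
qed

lemma cont_on_S: "(\<And>s. s0 \<le> s \<Longrightarrow> s \<le> s1 \<Longrightarrow> isCont h s) \<Longrightarrow> continuous_on {s0..s1} h"
  by (intro continuous_at_imp_continuous_on) auto

lemma prim_deriv:
  fixes h :: "real \<Rightarrow> real"
  assumes "continuous_on {s0..s1} h" "s0 < t" "t < s1"
  shows "((\<lambda>t. integral {s0..t} h) has_real_derivative h t) (at t)"
proof -
  have "((\<lambda>t. integral {s0..t} h) has_real_derivative h t) (at t within {s0..s1})"
    by (rule integral_has_real_derivative[OF assms(1)]) (use assms in simp)
  moreover have "t \<in> interior {s0..s1}" using assms by simp
  ultimately show ?thesis by (metis at_within_interior)
qed

lemma prim_cont:
  fixes h :: "real \<Rightarrow> real"
  assumes "continuous_on {s0..s1} h"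
  shows "continuous_on {s0..s1} (\<lambda>t. integral {s0..t} h)"
proof -
  have "\<And>t. t \<in> {s0..s1} \<Longrightarrow> ((\<lambda>t. integral {s0..t} h) has_real_derivative h t) (at t within {s0..s1})"
    by (rule integral_has_real_derivative[OF assms])
  then have "\<And>t. t \<in> {s0..s1} \<Longrightarrow> continuous (at t within {s0..s1}) (\<lambda>t. integral {s0..t} h)"
    using DERIV_continuous by blast
  then show ?thesis using continuous_on_eq_continuous_within by blast
qed

lemma cont_w: "continuous_on {s0..s1} w" by (intro cont_on_S isCont_w)

definition Psi :: "real \<Rightarrow> real" where "Psi t = integral {s0..t} (\<lambda>s. s * w s)"
definition Om :: "real \<Rightarrow> real" where "Om t = integral {s0..t} (\<lambda>s. (1 - s) * w s)"

lemma cont_Psi_int: "continuous_on {s0..s1} (\<lambda>s. s * w s)"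
  using cont_w by (intro continuous_intros)
lemma cont_Om_int: "continuous_on {s0..s1} (\<lambda>s. (1 - s) * w s)"
  using cont_w by (intro continuous_intros)

lemma cont_Psi: "continuous_on {s0..s1} Psi"
  unfolding Psi_def[abs_def] by (rule prim_cont[OF cont_Psi_int])
lemma cont_Om: "continuous_on {s0..s1} Om"
  unfolding Om_def[abs_def] by (rule prim_cont[OF cont_Om_int])

definition Lam :: "real \<Rightarrow> real" where
  "Lam t = integral {s0..t} (\<lambda>s. w s * (1 - s) * Psi s - s * w s * Om s)"

lemma cont_Lam_int: "continuous_on {s0..s1} (\<lambda>s. w s * (1 - s) * Psi s - s * w s * Om s)"
  using cont_w cont_Psi cont_Om by (intro continuous_intros)

lemma Psi_deriv: "s0 < t \<Longrightarrow> t < s1 \<Longrightarrow> (Psi has_real_derivative t * w t) (at t)"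
  unfolding Psi_def[abs_def] by (rule prim_deriv[OF cont_Psi_int])
lemma Om_deriv: "s0 < t \<Longrightarrow> t < s1 \<Longrightarrow> (Om has_real_derivative (1 - t) * w t) (at t)"
  unfolding Om_def[abs_def] by (rule prim_deriv[OF cont_Om_int])
lemma Lam_deriv: "s0 < t \<Longrightarrow> t < s1 \<Longrightarrow> (Lam has_real_derivative (w t * (1 - t) * Psi t - t * w t * Om t)) (at t)"
  unfolding Lam_def[abs_def] by (rule prim_deriv[OF cont_Lam_int])

end

context huber begin

lemma ftc_real:
  fixes G g :: "real \<Rightarrow> real"
  assumes "a \<le> b" "\<And>x. x \<in> {a..b} \<Longrightarrow> (G has_real_derivative g x) (at x)"
  shows "(g has_integral G b - G a) {a..b}"
proof (rule fundamental_theorem_of_calculus[OF assms(1)])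
  fix x assume "x \<in> {a..b}"
  then have "(G has_real_derivative g x) (at x within {a..b})"
    using assms(2) has_field_derivative_at_within by blast
  then show "(G has_vector_derivative g x) (at x within {a..b})"
    by (simp add: has_real_derivative_iff_has_vector_derivative)
qed

lemma kern_eq: "(min s t - s * t) / (f (Q s) * f (Q t)) = (min s t - s * t) * w s * w t"
  by (simp add: w_def)

lemma inner_formula:
  assumes "s0 < a" "a \<le> t" "t \<le> b" "b < s1"
  shows "((\<lambda>s. (min s t - s * t) / (f (Q s) * f (Q t))) has_integral
          (w t * ((1 - t) * (Psi t - Psi a) + t * (Om b - Om t)))) {a..b}"
proof -
  have h1: "((\<lambda>s. (1 - t) * w t * (s * w s)) has_integral
      ((1 - t) * w t * Psi t - (1 - t) * w t * Psi a)) {a..t}"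
  proof (rule ftc_real[where G="\<lambda>s. (1 - t) * w t * Psi s"])
    show "a \<le> t" by fact
    fix x assume "x \<in> {a..t}"
    then have "s0 < x" "x < s1" using assms by auto
    then show "((\<lambda>s. (1 - t) * w t * Psi s) has_real_derivative (1 - t) * w t * (x * w x)) (at x)"
      by (intro DERIV_cmult Psi_deriv)
  qed
  have h1': "((\<lambda>s. (min s t - s * t) / (f (Q s) * f (Q t))) has_integral
      ((1 - t) * w t * Psi t - (1 - t) * w t * Psi a)) {a..t}"
    by (rule has_integral_eq[OF _ h1]) (simp only: kern_eq, auto simp: min_def algebra_simps)
  have h2: "((\<lambda>s. t * w t * ((1 - s) * w s)) has_integral
      (t * w t * Om b - t * w t * Om t)) {t..b}"
  proof (rule ftc_real[where G="\<lambda>s. t * w t * Om s"])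
    show "t \<le> b" by fact
    fix x assume "x \<in> {t..b}"
    then have "s0 < x" "x < s1" using assms by auto
    then show "((\<lambda>s. t * w t * Om s) has_real_derivative t * w t * ((1 - x) * w x)) (at x)"
      by (intro DERIV_cmult Om_deriv)
  qed
  have h2': "((\<lambda>s. (min s t - s * t) / (f (Q s) * f (Q t))) has_integral
      (t * w t * Om b - t * w t * Om t)) {t..b}"
    by (rule has_integral_eq[OF _ h2]) (simp only: kern_eq, auto simp: min_def algebra_simps)
  have "((\<lambda>s. (min s t - s * t) / (f (Q s) * f (Q t))) has_integral
      (((1 - t) * w t * Psi t - (1 - t) * w t * Psi a) + (t * w t * Om b - t * w t * Om t))) {a..b}"
    by (rule has_integral_combine[OF assms(2,3) h1' h2'])
  moreover have "((1 - t) * w t * Psi t - (1 - t) * w t * Psi a) + (t * w t * Om b - t * w t * Om t)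
     = w t * ((1 - t) * (Psi t - Psi a) + t * (Om b - Om t))" by (simp add: algebra_simps)
  ultimately show ?thesis by simp
qed

definition Ival :: "real \<Rightarrow> real \<Rightarrow> real" where
  "Ival a b = Lam b - Lam a - Psi a * (Om b - Om a) + Om b * (Psi b - Psi a)"

lemma outer_formula:
  assumes "s0 < a" "a \<le> b" "b < s1"
  shows "((\<lambda>t. integral {a..b} (\<lambda>s. (min s t - s * t) / (f (Q s) * f (Q t)))) has_integral Ival a b) {a..b}"
proof -
  have h: "((\<lambda>t. w t * ((1 - t) * (Psi t - Psi a) + t * (Om b - Om t))) has_integral
     ((Lam b - Psi a * Om b + Om b * Psi b) - (Lam a - Psi a * Om a + Om b * Psi a))) {a..b}"
  proof (rule ftc_real[where G="\<lambda>t. Lam t - Psi a * Om t + Om b * Psi t"])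
    show "a \<le> b" by fact
    fix x assume "x \<in> {a..b}"
    then have x: "s0 < x" "x < s1" using assms by auto
    have "((\<lambda>t. Lam t - Psi a * Om t + Om b * Psi t) has_real_derivative
       (w x * (1 - x) * Psi x - x * w x * Om x) - Psi a * ((1 - x) * w x) + Om b * (x * w x)) (at x)"
      by (intro DERIV_add DERIV_diff DERIV_cmult Lam_deriv[OF x] Om_deriv[OF x] Psi_deriv[OF x])
    moreover have "(w x * (1 - x) * Psi x - x * w x * Om x) - Psi a * ((1 - x) * w x) + Om b * (x * w x)
       = w x * ((1 - x) * (Psi x - Psi a) + x * (Om b - Om x))" by (simp add: algebra_simps)
    ultimately show "((\<lambda>t. Lam t - Psi a * Om t + Om b * Psi t) has_real_derivative
       w x * ((1 - x) * (Psi x - Psi a) + x * (Om b - Om x))) (at x)" by simp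
  qed
  have e: "(Lam b - Psi a * Om b + Om b * Psi b) - (Lam a - Psi a * Om a + Om b * Psi a) = Ival a b"
    by (simp add: Ival_def algebra_simps)
  show ?thesis
  proof (rule has_integral_eq[OF _ h[unfolded e]])
    fix t assume "t \<in> {a..b}"
    then show "w t * ((1 - t) * (Psi t - Psi a) + t * (Om b - Om t)) =
      integral {a..b} (\<lambda>s. (min s t - s * t) / (f (Q s) * f (Q t)))"
      using inner_formula[of a t b] assms by (auto dest: integral_unique)
  qed
qed

lemma sigma2_eq:
  assumes "s0 < a" "a \<le> 1 - b" "1 - b < s1"
  shows "sigma2 k1 k2 a b = 1 / (1 - a - b)^2 * Ival a (1 - b)"
  unfolding sigma2_def using integral_unique[OF outer_formula[OF assms]] by simp

end

context huber begin

definition Ia :: "real \<Rightarrow> real \<Rightarrow> real" where "Ia a b = -2 * a * w a * (Om b - Om a)"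
definition Ic :: "real \<Rightarrow> real \<Rightarrow> real" where "Ic a b = 2 * (1 - b) * w b * (Psi b - Psi a)"
definition Iaa :: "real \<Rightarrow> real \<Rightarrow> real" where
  "Iaa a b = -2 * (w a + a * wd a) * (Om b - Om a) + 2 * a * (1 - a) * (w a)^2"
definition Iac :: "real \<Rightarrow> real \<Rightarrow> real" where "Iac a b = -2 * a * w a * (1 - b) * w b"
definition Icc :: "real \<Rightarrow> real \<Rightarrow> real" where
  "Icc a b = -2 * (w b - (1 - b) * wd b) * (Psi b - Psi a) + 2 * (1 - b) * b * (w b)^2"

lemma Lam_chain: "(B has_real_derivative B') (at t) \<Longrightarrow> s0 < B t \<Longrightarrow> B t < s1 \<Longrightarrow>
  ((\<lambda>t. Lam (B t)) has_real_derivative (w (B t) * (1 - B t) * Psi (B t) - B t * w (B t) * Om (B t)) * B') (at t)"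
  by (rule DERIV_chain2[OF Lam_deriv])
lemma Psi_chain: "(B has_real_derivative B') (at t) \<Longrightarrow> s0 < B t \<Longrightarrow> B t < s1 \<Longrightarrow>
  ((\<lambda>t. Psi (B t)) has_real_derivative (B t * w (B t)) * B') (at t)"
  by (rule DERIV_chain2[OF Psi_deriv])
lemma Om_chain: "(B has_real_derivative B') (at t) \<Longrightarrow> s0 < B t \<Longrightarrow> B t < s1 \<Longrightarrow>
  ((\<lambda>t. Om (B t)) has_real_derivative ((1 - B t) * w (B t)) * B') (at t)"
  by (rule DERIV_chain2[OF Om_deriv])
lemma w_chain: "(B has_real_derivative B') (at t) \<Longrightarrow> s0 < B t \<Longrightarrow> B t < s1 \<Longrightarrow>
  ((\<lambda>t. w (B t)) has_real_derivative wd (B t) * B') (at t)"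
  by (rule DERIV_chain2[OF w_deriv]) auto

lemma Ival_chain:
  assumes A: "(A has_real_derivative A') (at t)" and B: "(B has_real_derivative B') (at t)"
    and "s0 < A t" "A t < s1" "s0 < B t" "B t < s1"
  shows "((\<lambda>t. Ival (A t) (B t)) has_real_derivative Ia (A t) (B t) * A' + Ic (A t) (B t) * B') (at t)"
proof -
  have "((\<lambda>t. Lam (B t) - Lam (A t) - Psi (A t) * (Om (B t) - Om (A t)) + Om (B t) * (Psi (B t) - Psi (A t)))
     has_real_derivative Ia (A t) (B t) * A' + Ic (A t) (B t) * B') (at t)"
    using assms
    by (auto intro!: derivative_eq_intros Lam_chain Psi_chain Om_chain simp: Ia_def Ic_def algebra_simps)
  then show ?thesis unfolding Ival_def .
qed

lemma Ia_chain:
  assumes A: "(A has_real_derivative A') (at t)" and B: "(B has_real_derivative B') (at t)"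
    and "s0 < A t" "A t < s1" "s0 < B t" "B t < s1"
  shows "((\<lambda>t. Ia (A t) (B t)) has_real_derivative Iaa (A t) (B t) * A' + Iac (A t) (B t) * B') (at t)"
proof -
  have "((\<lambda>t. -2 * A t * w (A t) * (Om (B t) - Om (A t)))
     has_real_derivative Iaa (A t) (B t) * A' + Iac (A t) (B t) * B') (at t)"
    using assms
    by (auto intro!: derivative_eq_intros w_chain Om_chain simp: Iaa_def Iac_def algebra_simps power2_eq_square)
  then show ?thesis unfolding Ia_def .
qed

lemma Ic_chain:
  assumes A: "(A has_real_derivative A') (at t)" and B: "(B has_real_derivative B') (at t)"
    and "s0 < A t" "A t < s1" "s0 < B t" "B t < s1"
  shows "((\<lambda>t. Ic (A t) (B t)) has_real_derivative Iac (A t) (B t) * A' + Icc (A t) (B t) * B') (at t)"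
proof -
  have "((\<lambda>t. 2 * (1 - B t) * w (B t) * (Psi (B t) - Psi (A t)))
     has_real_derivative Iac (A t) (B t) * A' + Icc (A t) (B t) * B') (at t)"
    using assms
    by (auto intro!: derivative_eq_intros w_chain Psi_chain simp: Icc_def Iac_def algebra_simps power2_eq_square)
  then show ?thesis unfolding Ic_def .
qed

end

context huber begin

definition P0 :: real where "P0 = F (-k1)"
definition c0 :: real where "c0 = F k2"

lemma P0_eq: "f (-k1) = k1 * P0" using cdf_m1 k1 by (simp add: P0_def)
lemma c0_eq: "f k2 = k2 * (1 - c0)" using cdf_k2 k2 by (simp add: c0_def)

lemma s0_P0: "s0 < P0" unfolding s0_def P0_def by (rule cdf_less) simp
lemma P0_c0: "P0 < c0" unfolding c0_def P0_def using k1 k2 by (intro cdf_less) simp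
lemma c0_s1: "c0 < s1" unfolding s1_def c0_def by (rule cdf_less) simp

lemma Q_P0: "Q P0 = -k1" by (simp add: P0_def qf_cdf)
lemma Q_c0: "Q c0 = k2" by (simp add: c0_def qf_cdf)

lemma w_P0: "w P0 = 1 / (k1 * P0)" by (simp add: w_def Q_P0 P0_eq)
lemma w_c0: "w c0 = 1 / (k2 * (1 - c0))" by (simp add: w_def Q_c0 c0_eq)

lemma dl_mid: "-k1 \<le> x \<Longrightarrow> x \<le> k2 \<Longrightarrow> dl x = -x" by (simp add: dl_def max_def)

lemma wd_P0: "wd P0 = - k1 * (w P0)^2"
  using dl_mid[of "-k1"] k1 k2 by (simp add: wd_def Q_P0)
lemma wd_c0: "wd c0 = k2 * (w c0)^2"
  using dl_mid[of k2] k1 k2 by (simp add: wd_def Q_c0)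

lemma Q_deriv: "s0 \<le> b \<Longrightarrow> b \<le> s1 \<Longrightarrow> (Q has_real_derivative w b) (at b)"
  by (erule in_rangeE, assumption) (simp add: w_F qf_deriv)

lemma wf1: "w b * f (Q b) = 1" using dens_pos[of "Q b"] by (simp add: w_def)

lemma fQ_deriv: assumes "s0 \<le> b" "b \<le> s1" shows "((\<lambda>s. f (Q s)) has_real_derivative dl (Q b)) (at b)"
proof -
  have "((\<lambda>s. f (Q s)) has_real_derivative (f (Q b) * dl (Q b)) * w b) (at b)"
    by (rule DERIV_chain2[OF dens_deriv Q_deriv[OF assms]])
  moreover have "(f (Q b) * dl (Q b)) * w b = dl (Q b) * (w b * f (Q b))" by (simp add: algebra_simps)
  ultimately show ?thesis using wf1[of b] by simp
qed

lemma Q_mid: assumes "P0 \<le> b" "b \<le> c0" shows "-k1 \<le> Q b \<and> Q b \<le> k2"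
proof -
  obtain x where "-k1 \<le> x" "x \<le> k2" "F x = b"
    using cdf_surj[of "-k1" b k2] assms unfolding P0_def c0_def by auto
  then show ?thesis using qf_cdf by auto
qed

lemma const_on_mid:
  fixes \<phi> :: "real \<Rightarrow> real"
  assumes d: "\<And>b. P0 \<le> b \<Longrightarrow> b \<le> c0 \<Longrightarrow> (\<phi> has_real_derivative 0) (at b)"
    and b: "P0 \<le> b" "b \<le> c0"
  shows "\<phi> b = \<phi> P0"
proof (rule DERIV_isconst2[OF P0_c0 _ _ b])
  have "\<And>x. x \<in> {P0..c0} \<Longrightarrow> isCont \<phi> x" using d DERIV_isCont by auto
  then show "continuous_on {P0..c0} \<phi>"
    by (intro continuous_at_imp_continuous_on) auto
next
  fix x assume "P0 < x" "x < c0" then show "(\<phi> has_real_derivative 0) (at x)" using d by auto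
qed

lemma range_mid: "P0 \<le> b \<Longrightarrow> b \<le> c0 \<Longrightarrow> s0 < b \<and> b < s1"
  using s0_P0 c0_s1 by auto

lemma Psi_mid: assumes "P0 \<le> b" "b \<le> c0" shows "Psi b - Psi P0 = b * Q b + f (Q b)"
proof -
  define \<phi> where "\<phi> b = Psi b - Psi P0 - (b * Q b + f (Q b))" for b
  have d: "(\<phi> has_real_derivative 0) (at x)" if "P0 \<le> x" "x \<le> c0" for x
  proof -
    have r: "s0 < x" "x < s1" using range_mid that by auto
    have "(\<phi> has_real_derivative (x * w x - 0 - (1 * Q x + x * w x + dl (Q x)))) (at x)"
      unfolding \<phi>_def[abs_def]
      using Psi_deriv[OF r] Q_deriv[of x] fQ_deriv[of x] r
      by (auto intro!: derivative_eq_intros)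
    moreover have "dl (Q x) = - Q x" using Q_mid[OF that] dl_mid by auto
    ultimately show ?thesis by simp
  qed
  have "\<phi> b = \<phi> P0" by (rule const_on_mid[OF d assms])
  moreover have "\<phi> P0 = 0" unfolding \<phi>_def using Q_P0 P0_eq by simp
  ultimately show ?thesis unfolding \<phi>_def by simp
qed

definition Cf :: "real \<Rightarrow> real" where
  "Cf b = b - P0 - Q b * f (Q b) + (Q b)^2 * (1 - b) - (Q b * (1 - b) - f (Q b))^2"

lemma Ival_mid: assumes "P0 \<le> b" "b \<le> c0" shows "Ival P0 b = Cf b"
proof -
  define \<phi> where "\<phi> b = Ival P0 b - Cf b" for b
  have d: "(\<phi> has_real_derivative 0) (at x)" if "P0 \<le> x" "x \<le> c0" for x
  proof -
    have r: "s0 < x" "x < s1" using range_mid that by auto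
    have dI: "((\<lambda>t. Ival P0 t) has_real_derivative Ic P0 x) (at x)"
      using Ival_chain[of "\<lambda>_. P0" 0 x "\<lambda>t. t" 1] r s0_P0 P0_c0 c0_s1 by simp
    have dl: "dl (Q x) = - Q x" using Q_mid[OF that] dl_mid by auto
    have ps: "Psi x - Psi P0 = x * Q x + f (Q x)" by (rule Psi_mid[OF that])
    have fp: "f (Q x) > 0" by (rule dens_pos)
    have "(\<phi> has_real_derivative
       Ic P0 x - (1 - 0 - (w x * f (Q x) + Q x * dl (Q x)) + (2 * Q x * w x * (1 - x) + (Q x)^2 * (0 - 1))
          - 2 * (Q x * (1 - x) - f (Q x)) * (w x * (1 - x) + Q x * (0 - 1) - dl (Q x)))) (at x)"
      unfolding \<phi>_def[abs_def] Cf_def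
      using dI Q_deriv[of x] fQ_deriv[of x] r
      by (auto intro!: derivative_eq_intros simp: power2_eq_square algebra_simps)
    moreover have "Ic P0 x - (1 - 0 - (w x * f (Q x) + Q x * dl (Q x)) + (2 * Q x * w x * (1 - x) + (Q x)^2 * (0 - 1))
          - 2 * (Q x * (1 - x) - f (Q x)) * (w x * (1 - x) + Q x * (0 - 1) - dl (Q x))) = 0"
      unfolding Ic_def ps dl using fp by (simp add: w_def field_simps power2_eq_square)
    ultimately show ?thesis by simp
  qed
  have "\<phi> b = \<phi> P0" by (rule const_on_mid[OF d assms])
  moreover have "\<phi> P0 = 0" unfolding \<phi>_def Cf_def Ival_def using Q_P0 P0_eq
    by (simp add: power2_eq_square algebra_simps)
  ultimately show ?thesis unfolding \<phi>_def by simp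
qed

lemma J2_c0: "Psi c0 - Psi P0 = k2"
  using Psi_mid[of c0] P0_c0 Q_c0 c0_eq by (simp add: algebra_simps)

lemma Om_mid: assumes "P0 \<le> b" "b \<le> c0" shows "Om b - Om P0 = (Q b + k1) - (Psi b - Psi P0)"
proof -
  define \<phi> where "\<phi> b = Om b - Om P0 - ((Q b + k1) - (Psi b - Psi P0))" for b
  have d: "(\<phi> has_real_derivative 0) (at x)" if "P0 \<le> x" "x \<le> c0" for x
  proof -
    have r: "s0 < x" "x < s1" using range_mid that by auto
    have "(\<phi> has_real_derivative ((1 - x) * w x - 0 - ((w x + 0) - (x * w x - 0)))) (at x)"
      unfolding \<phi>_def[abs_def]
      using Om_deriv[OF r] Psi_deriv[OF r] Q_deriv[of x] r
      by (auto intro!: derivative_eq_intros)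
    then show ?thesis by (simp add: algebra_simps)
  qed
  have "\<phi> b = \<phi> P0" by (rule const_on_mid[OF d assms])
  moreover have "\<phi> P0 = 0" unfolding \<phi>_def using Q_P0 by simp
  ultimately show ?thesis unfolding \<phi>_def by simp
qed

lemma J1_c0: "Om c0 - Om P0 = k1"
  using Om_mid[of c0] P0_c0 Q_c0 J2_c0 by simp

lemma I_c0: "Ival P0 c0 = c0 - P0"
  using Ival_mid[of c0] P0_c0 Q_c0 c0_eq by (simp add: Cf_def power2_eq_square algebra_simps)

end

context huber begin

lemma f_int_mid: "(f has_integral (c0 - P0)) {-k1..k2}"
proof -
  have "F k2 = F (-k1) + integral {-k1..k2} f" using cdf_split[of "-k1" k2] k1 k2 by simp
  then show ?thesis using dens_int_interval[of "-k1" k2] by (simp add: P0_def c0_def)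
qed

lemma xf_int_mid: "((\<lambda>x. x * f x) has_integral (f (-k1) - f k2)) {-k1..k2}"
proof -
  have "((\<lambda>x. x * f x) has_integral ((- f k2) - (- f (-k1)))) {-k1..k2}"
  proof (rule ftc_real)
    show "-k1 \<le> k2" using k1 k2 by simp
    fix x assume x: "x \<in> {-k1..k2}"
    have "((\<lambda>x. - f x) has_real_derivative - (f x * dl x)) (at x)"
      by (intro DERIV_minus dens_deriv)
    moreover have "- (f x * dl x) = x * f x" using dl_mid[of x] x by simp
    ultimately show "((\<lambda>x. - f x) has_real_derivative x * f x) (at x)" by simp
  qed
  then show ?thesis by simp
qed

lemma x2f_int_mid: "((\<lambda>x. x^2 * f x) has_integral (- k2 * f k2 - k1 * f (-k1) + (c0 - P0))) {-k1..k2}"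
proof -
  have "((\<lambda>x. x^2 * f x) has_integral ((- k2 * f k2 + F k2) - (- (-k1) * f (-k1) + F (-k1)))) {-k1..k2}"
  proof (rule ftc_real)
    show "-k1 \<le> k2" using k1 k2 by simp
    fix x assume x: "x \<in> {-k1..k2}"
    have "((\<lambda>x. - x * f x + F x) has_real_derivative (- 1 * f x + (f x * dl x) * (- x)) + f x) (at x)"
      by (intro DERIV_add DERIV_mult DERIV_minus DERIV_ident dens_deriv cdf_deriv)
    moreover have "(- 1 * f x + (f x * dl x) * (- x)) + f x = x^2 * f x" using dl_mid[of x] x
      by (simp add: power2_eq_square)
    ultimately show "((\<lambda>x. - x * f x + F x) has_real_derivative x^2 * f x) (at x)" by simp
  qed
  then show ?thesis by (simp add: P0_def c0_def algebra_simps)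
qed

lemma cauchy_schwarz_mid:
  "(c0 - P0) * (- k2 * f k2 - k1 * f (-k1) + (c0 - P0)) > (f (-k1) - f k2)^2"
proof -
  define D where "D = c0 - P0"
  define S where "S = f (-k1) - f k2"
  define N where "N = - k2 * f k2 - k1 * f (-k1) + (c0 - P0)"
  have D: "D > 0" using P0_c0 by (simp add: D_def)
  define \<mu> where "\<mu> = S / D"
  have h: "((\<lambda>x. (x - \<mu>)^2 * f x) has_integral (N - 2 * \<mu> * S + \<mu>^2 * D)) {-k1..k2}"
  proof -
    have "((\<lambda>x. x^2 * f x - (2 * \<mu>) * (x * f x) + \<mu>^2 * f x) has_integral (N - (2 * \<mu>) * S + \<mu>^2 * D)) {-k1..k2}"
      by (intro has_integral_add has_integral_diff has_integral_mult_right x2f_int_mid[folded N_def]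
            xf_int_mid[folded S_def] f_int_mid[folded D_def])
    moreover have "\<And>x. x^2 * f x - (2 * \<mu>) * (x * f x) + \<mu>^2 * f x = (x - \<mu>)^2 * f x"
      by (simp add: power2_eq_square algebra_simps)
    ultimately show ?thesis by simp
  qed
  have cont: "continuous_on {-k1..k2} (\<lambda>x. (x - \<mu>)^2 * f x)"
    by (intro continuous_intros cont_dens)
  have nn: "\<And>x. x \<in> {-k1..k2} \<Longrightarrow> 0 \<le> (x - \<mu>)^2 * f x" using dens_pos by (simp add: less_imp_le)
  have lt: "-k1 < k2" using k1 k2 by simp
  have ge: "N - 2 * \<mu> * S + \<mu>^2 * D \<ge> 0" by (rule has_integral_nonneg[OF h]) (use nn in blast)
  have iff: "integral {-k1..k2} (\<lambda>x. (x - \<mu>)^2 * f x) = 0 \<longleftrightarrow> (\<forall>x\<in>{-k1..k2}. (x - \<mu>)^2 * f x = 0)"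
    by (rule integral_eq_0_iff[OF cont lt nn])
  have "\<exists>x\<in>{-k1..k2}. (x - \<mu>)^2 * f x \<noteq> 0"
  proof (cases "\<mu> = k2")
    case True
    then show ?thesis using dens_pos[of "-k1"] lt by (intro bexI[of _ "-k1"]) auto
  next
    case False
    then show ?thesis using dens_pos[of k2] lt by (intro bexI[of _ k2]) auto
  qed
  then have "N - 2 * \<mu> * S + \<mu>^2 * D \<noteq> 0" using iff integral_unique[OF h] by auto
  with ge have pos: "N - 2 * \<mu> * S + \<mu>^2 * D > 0" by simp
  have "N - 2 * \<mu> * S + \<mu>^2 * D = (D * N - S^2) / D"
    using D by (simp add: \<mu>_def field_simps power2_eq_square)
  with pos D have "D * N - S^2 > 0" by (simp add: zero_less_divide_iff)
  then show ?thesis by (simp add: D_def N_def S_def)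
qed

end

lemma quad_alg:
  fixes k1 k2 P q D :: real
  assumes k1: "k1 > 0" and k2: "k2 > 0" and P: "P > 0" and q: "q > 0" and D: "D = 1 - P - q" "D > 0"
    and cs: "D * (D - k2^2 * q - k1^2 * P) > (k1 * P - k2 * q)^2"
  defines "m11 \<equiv> 2 * D^2 * (1 - P) / (k1^2 * P) - 2 * D"
    and "m22 \<equiv> 2 * D^2 * (1 - q) / (k2^2 * q) - 2 * D"
    and "m12 \<equiv> - 2 * D^2 / (k1 * k2) + 2 * D"
  shows "m11 > 0 \<and> m11 * m22 - m12^2 > 0"
proof -
  define K where "K = k1^2 * k2^2 * P * q"
  have K: "K > 0" using k1 k2 P q by (simp add: K_def)
  define CS where "CS = D * (D - k2^2 * q - k1^2 * P) - (k1 * P - k2 * q)^2"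
  have CS: "CS > 0" using cs by (simp add: CS_def)
  have det: "m11 * m22 - m12^2 = 4 * D^3 * CS / K"
    unfolding m11_def m22_def m12_def CS_def K_def D(1) using k1 k2 P q
    by (simp add: field_simps power2_eq_square power3_eq_cube)
  have detpos: "m11 * m22 - m12^2 > 0" unfolding det using D CS K by simp
  define E where "E = D * (k1^2 * P + k2^2 * q) + (k1 * P - k2 * q)^2"
  have E: "E > 0" unfolding E_def using D k1 k2 P q
    by (intro add_pos_nonneg mult_pos_pos) auto
  have sum: "m11 + m22 + 2 * m12 = 2 * D^2 * E / K"
    unfolding m11_def m22_def m12_def E_def K_def D(1) using k1 k2 P q
    by (simp add: field_simps power2_eq_square)
  have sumpos: "m11 + m22 + 2 * m12 > 0" unfolding sum using D E K by simp
  have "m11 > 0"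
  proof (rule ccontr)
    assume "\<not> m11 > 0"
    then have le: "m11 \<le> 0" by simp
    have prod: "m11 * m22 > 0" using detpos zero_le_power2[of m12] by linarith
    then have m: "m11 < 0 \<and> m22 < 0" using le by (auto simp: zero_less_mult_iff)
    have eq: "(m11 + m22)^2 - (2 * m12)^2 = (m11 - m22)^2 + 4 * (m11 * m22 - m12^2)"
      by (simp add: power2_eq_square algebra_simps)
    have "(m11 - m22)^2 + 4 * (m11 * m22 - m12^2) > 0"
      by (intro add_nonneg_pos) (use detpos in simp_all)
    then have "(m11 + m22)^2 - (2 * m12)^2 > 0" unfolding eq .
    then have "(2 * m12)^2 < (m11 + m22)^2" by simp
    then have "\<bar>2 * m12\<bar>^2 < \<bar>m11 + m22\<bar>^2" by simp
    then have "\<bar>2 * m12\<bar> < \<bar>m11 + m22\<bar>" by (rule power2_less_imp_less) simp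
    then show False using m sumpos by linarith
  qed
  with detpos show ?thesis by simp
qed

lemma cont_pos_ball:
  fixes g :: "'a::metric_space \<Rightarrow> real"
  assumes "isCont g x" "g x > 0"
  shows "\<exists>d>0. \<forall>p. dist p x < d \<longrightarrow> g p > 0"
proof -
  obtain d where d: "d > 0" "\<forall>p. dist p x < d \<longrightarrow> dist (g p) (g x) < g x"
    using assms(1)[unfolded continuous_at_eps_delta] assms(2) by blast
  show ?thesis
    by (rule exI[of _ d]) (use d in \<open>auto simp: dist_real_def abs_less_iff\<close>)
qed

context huber begin

definition M11 :: "real \<Rightarrow> real \<Rightarrow> real" where
  "M11 a c = (c - a)^2 * Iaa a c + 4 * (c - a) * Ia a c + 6 * Ival a c"
definition M22 :: "real \<Rightarrow> real \<Rightarrow> real" where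
  "M22 a c = (c - a)^2 * Icc a c - 4 * (c - a) * Ic a c + 6 * Ival a c"
definition M12 :: "real \<Rightarrow> real \<Rightarrow> real" where
  "M12 a c = (c - a)^2 * Iac a c - 2 * (c - a) * Ia a c + 2 * (c - a) * Ic a c - 6 * Ival a c"

lemma P0_pos: "P0 > 0" using P0_eq dens_pos[of "-k1"] k1 by (simp add: zero_less_mult_iff)
lemma q0_pos: "1 - c0 > 0" using c0_eq dens_pos[of k2] k2 by (simp add: zero_less_mult_iff)

lemma Ia_c: "Ia P0 c0 = -2" using P0_pos k1 by (simp add: Ia_def w_P0 J1_c0)
lemma Ic_c: "Ic P0 c0 = 2" using q0_pos k2 by (simp add: Ic_def w_c0 J2_c0 field_simps)
lemma Iac_c: "Iac P0 c0 = -2 / (k1 * k2)" using P0_pos q0_pos k1 k2 by (simp add: Iac_def w_P0 w_c0 field_simps)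
lemma Iaa_c: "Iaa P0 c0 = 2 * (1 - P0) / (k1^2 * P0)"
proof -
  have "w P0 + P0 * wd P0 = 0" using P0_pos k1 by (simp add: wd_P0 w_P0 power2_eq_square)
  then show ?thesis unfolding Iaa_def using P0_pos k1 by (simp add: w_P0 power2_eq_square field_simps)
qed
lemma Icc_c: "Icc P0 c0 = 2 * c0 / (k2^2 * (1 - c0))"
proof -
  have z: "w c0 - (1 - c0) * wd c0 = 0" using q0_pos k2 by (simp add: wd_c0 w_c0 power2_eq_square)
  have "Icc P0 c0 = 2 * (1 - c0) * c0 * (w c0)^2" unfolding Icc_def z by simp
  also have "... = 2 * c0 / (k2^2 * (1 - c0))"
  proof -
    have gen: "\<And>q::real. q > 0 \<Longrightarrow> 2 * q * c0 * (1 / (k2 * q))^2 = 2 * c0 / (k2^2 * q)"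
      using k2 by (simp add: power2_eq_square field_simps)
    show ?thesis unfolding w_c0 by (rule gen[OF q0_pos])
  qed
  finally show ?thesis .
qed

lemma center_pos: "M11 P0 c0 > 0 \<and> M11 P0 c0 * M22 P0 c0 - (M12 P0 c0)^2 > 0"
proof -
  define P q D where "P = P0" and "q = 1 - c0" and "D = c0 - P0"
  have D: "D = 1 - P - q" "D > 0" using P0_c0 by (auto simp: P_def q_def D_def)
  have cs: "D * (D - k2^2 * q - k1^2 * P) > (k1 * P - k2 * q)^2"
    using cauchy_schwarz_mid unfolding P_def q_def D_def P0_eq c0_eq
    by (simp add: power2_eq_square algebra_simps)
  have m11: "M11 P0 c0 = 2 * D^2 * (1 - P) / (k1^2 * P) - 2 * D"
    unfolding M11_def Iaa_c Ia_c I_c0 by (simp add: P_def D_def algebra_simps)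
  have m22: "M22 P0 c0 = 2 * D^2 * (1 - q) / (k2^2 * q) - 2 * D"
    unfolding M22_def Icc_c Ic_c I_c0 by (simp add: q_def D_def algebra_simps)
  have m12: "M12 P0 c0 = - 2 * D^2 / (k1 * k2) + 2 * D"
    unfolding M12_def Iac_c Ia_c Ic_c I_c0 by (simp add: D_def algebra_simps)
  show ?thesis unfolding m11 m22 m12
    by (rule quad_alg[OF k1 k2 _ _ D cs]) (use P0_pos q0_pos in \<open>simp_all add: P_def q_def\<close>)
qed

end

context huber begin

lemma cc_w: "continuous (at p) A \<Longrightarrow> s0 < A p \<Longrightarrow> A p < s1 \<Longrightarrow> continuous (at p) (\<lambda>p. w (A p))"
  by (rule isCont_o2[OF _ isCont_w]) auto
lemma cc_wd: "continuous (at p) A \<Longrightarrow> s0 < A p \<Longrightarrow> A p < s1 \<Longrightarrow> continuous (at p) (\<lambda>p. wd (A p))"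
  by (rule isCont_o2[OF _ isCont_wd]) auto
lemma cc_Psi: "continuous (at p) A \<Longrightarrow> s0 < A p \<Longrightarrow> A p < s1 \<Longrightarrow> continuous (at p) (\<lambda>p. Psi (A p))"
  by (rule isCont_o2[OF _ DERIV_isCont[OF Psi_deriv]]) auto
lemma cc_Om: "continuous (at p) A \<Longrightarrow> s0 < A p \<Longrightarrow> A p < s1 \<Longrightarrow> continuous (at p) (\<lambda>p. Om (A p))"
  by (rule isCont_o2[OF _ DERIV_isCont[OF Om_deriv]]) auto
lemma cc_Lam: "continuous (at p) A \<Longrightarrow> s0 < A p \<Longrightarrow> A p < s1 \<Longrightarrow> continuous (at p) (\<lambda>p. Lam (A p))"
  by (rule isCont_o2[OF _ DERIV_isCont[OF Lam_deriv]]) auto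

definition Mdet :: "real \<Rightarrow> real \<Rightarrow> real" where
  "Mdet a c = M11 a c * M22 a c - (M12 a c)^2"

lemma isCont_Ms:
  fixes p :: "real \<times> real"
  assumes "s0 < fst p" "fst p < s1" "s0 < 1 - snd p" "1 - snd p < s1"
  shows "isCont (\<lambda>p. M11 (fst p) (1 - snd p)) p" "isCont (\<lambda>p. Mdet (fst p) (1 - snd p)) p"
proof -
  have c1: "isCont (\<lambda>p. Ival (fst p) (1 - snd p)) p" "isCont (\<lambda>p. Ia (fst p) (1 - snd p)) p"
    "isCont (\<lambda>p. Ic (fst p) (1 - snd p)) p" "isCont (\<lambda>p. Iaa (fst p) (1 - snd p)) p"
    "isCont (\<lambda>p. Iac (fst p) (1 - snd p)) p" "isCont (\<lambda>p. Icc (fst p) (1 - snd p)) p"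
    unfolding Ival_def Ia_def Ic_def Iaa_def Iac_def Icc_def using assms
    by (intro continuous_intros cc_w cc_wd cc_Psi cc_Om cc_Lam; simp)+
  have c2: "isCont (\<lambda>p. M11 (fst p) (1 - snd p)) p" "isCont (\<lambda>p. M22 (fst p) (1 - snd p)) p"
    "isCont (\<lambda>p. M12 (fst p) (1 - snd p)) p"
    unfolding M11_def M22_def M12_def using c1 by (intro continuous_intros; simp)+
  then show "isCont (\<lambda>p. M11 (fst p) (1 - snd p)) p" by simp
  show "isCont (\<lambda>p. Mdet (fst p) (1 - snd p)) p"
    unfolding Mdet_def using c2 by (intro continuous_intros; simp)+
qed

lemma nbhd:
  "\<exists>e>0. \<forall>p. dist p (P0, 1 - c0) < e \<longrightarrow>
     s0 < fst p \<and> fst p < 1 - snd p \<and> 1 - snd p < s1 \<and>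
     M11 (fst p) (1 - snd p) > 0 \<and> Mdet (fst p) (1 - snd p) > 0"
proof -
  let ?p0 = "(P0, 1 - c0)"
  have r: "s0 < fst ?p0" "fst ?p0 < s1" "s0 < 1 - snd ?p0" "1 - snd ?p0 < s1"
    using s0_P0 P0_c0 c0_s1 by auto
  obtain d1 where d1: "d1 > 0" "\<forall>p. dist p ?p0 < d1 \<longrightarrow> fst p - s0 > 0"
    using cont_pos_ball[where g="\<lambda>p. fst p - s0" and x="(P0, 1 - c0)"] s0_P0 by (auto intro!: continuous_intros)
  obtain d2 where d2: "d2 > 0" "\<forall>p. dist p ?p0 < d2 \<longrightarrow> (1 - snd p) - fst p > 0"
    using cont_pos_ball[where g="\<lambda>p. (1 - snd p) - fst p" and x="(P0, 1 - c0)"] P0_c0 by (auto intro!: continuous_intros)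
  obtain d3 where d3: "d3 > 0" "\<forall>p. dist p ?p0 < d3 \<longrightarrow> s1 - (1 - snd p) > 0"
    using cont_pos_ball[where g="\<lambda>p. s1 - (1 - snd p)" and x="(P0, 1 - c0)"] c0_s1 by (auto intro!: continuous_intros)
  obtain d4 where d4: "d4 > 0" "\<forall>p. dist p ?p0 < d4 \<longrightarrow> M11 (fst p) (1 - snd p) > 0"
    using cont_pos_ball[OF isCont_Ms(1)[OF r]] center_pos by auto
  obtain d5 where d5: "d5 > 0" "\<forall>p. dist p ?p0 < d5 \<longrightarrow> Mdet (fst p) (1 - snd p) > 0"
    using cont_pos_ball[OF isCont_Ms(2)[OF r]] center_pos by (auto simp: Mdet_def)
  show ?thesis
    by (rule exI[of _ "min d1 (min d2 (min d3 (min d4 d5)))"]) (use d1 d2 d3 d4 d5 in auto)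
qed

end

lemma strict_1d:
  fixes g g1 g2 :: "real \<Rightarrow> real"
  assumes d1: "\<And>t. 0 \<le> t \<Longrightarrow> t \<le> 1 \<Longrightarrow> (g has_real_derivative g1 t) (at t)"
    and d2: "\<And>t. 0 \<le> t \<Longrightarrow> t \<le> 1 \<Longrightarrow> (g1 has_real_derivative g2 t) (at t)"
    and pos: "\<And>t. 0 \<le> t \<Longrightarrow> t \<le> 1 \<Longrightarrow> g2 t > 0"
    and u: "0 < u" "u < 1"
  shows "g u < u * g 1 + (1 - u) * g 0"
proof -
  obtain z1 where z1: "0 < z1" "z1 < u" "g u - g 0 = (u - 0) * g1 z1"
    using MVT2[of 0 u g g1] d1 u by auto
  obtain z2 where z2: "u < z2" "z2 < 1" "g 1 - g u = (1 - u) * g1 z2"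
    using MVT2[of u 1 g g1] d1 u by auto
  obtain z3 where z3: "z1 < z3" "z3 < z2" "g1 z2 - g1 z1 = (z2 - z1) * g2 z3"
    using MVT2[of z1 z2 g1 g2] d2 z1 z2 by auto
  have "g2 z3 > 0" using pos z1 z2 z3 by auto
  then have "g1 z2 - g1 z1 > 0" using z3 z1 z2 by simp
  then have lt: "g1 z1 < g1 z2" by simp
  have "(1 - u) * (g u - g 0) = (1 - u) * u * g1 z1" using z1 by simp
  also have "... < u * (1 - u) * g1 z2" using lt u by simp
  also have "... = u * (g 1 - g u)" using z2 by simp
  finally have "(1 - u) * (g u - g 0) < u * (g 1 - g u)" .
  then show ?thesis by (simp add: algebra_simps)
qed

lemma quot2:
  fixes N Df :: "real \<Rightarrow> real"
  assumes "(N has_real_derivative N') (at t)" "(Df has_real_derivative d) (at t)" "Df t \<noteq> 0"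
  shows "((\<lambda>t. N t / (Df t)^2) has_real_derivative N' / (Df t)^2 - 2 * N t * d / (Df t)^3) (at t)"
  using assms by (auto intro!: derivative_eq_intros simp: field_simps power2_eq_square power3_eq_cube)

lemma quot3:
  fixes N Df :: "real \<Rightarrow> real"
  assumes "(N has_real_derivative N') (at t)" "(Df has_real_derivative d) (at t)" "Df t \<noteq> 0"
  shows "((\<lambda>t. N t / (Df t)^3) has_real_derivative N' / (Df t)^3 - 3 * N t * d / (Df t)^4) (at t)"
  using assms by (auto intro!: derivative_eq_intros simp: field_simps power2_eq_square power3_eq_cube power4_eq_xxxx)

lemma alg2:
  fixes D N1 N2 I d :: real
  assumes "D \<noteq> 0"
  shows "N2 / D^2 - 2 * N1 * d / D^3 - (2 * N1 * d / D^3 - 3 * (2 * I * d) * d / D^4)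
       = (D^2 * N2 - 4 * D * N1 * d + 6 * I * d^2) / D^4"
  using assms by (simp add: field_simps power2_eq_square power3_eq_cube power4_eq_xxxx)

context huber begin

definition QF :: "real \<Rightarrow> real \<Rightarrow> real \<Rightarrow> real \<Rightarrow> real" where
  "QF a c da dc = M11 a c * da^2 + 2 * M12 a c * da * dc + M22 a c * dc^2"

lemma QF_alt: "QF a c da dc = (c - a)^2 * ((Iaa a c * da + Iac a c * dc) * da + (Iac a c * da + Icc a c * dc) * dc)
    - 4 * (c - a) * (Ia a c * da + Ic a c * dc) * (dc - da) + 6 * Ival a c * (dc - da)^2"
  by (simp add: QF_def M11_def M12_def M22_def power2_eq_square algebra_simps)

lemma seg_derivs:
  fixes A B :: "real \<Rightarrow> real" and da dc t :: real
  assumes dA: "\<And>t. (A has_real_derivative da) (at t)" and dB: "\<And>t. (B has_real_derivative dc) (at t)"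
    and r: "s0 < A t" "A t < B t" "B t < s1"
  shows "((\<lambda>t. Ival (A t) (B t) / (B t - A t)^2) has_real_derivative
           (Ia (A t) (B t) * da + Ic (A t) (B t) * dc) / (B t - A t)^2 - 2 * Ival (A t) (B t) * (dc - da) / (B t - A t)^3) (at t)"
    and "((\<lambda>t. (Ia (A t) (B t) * da + Ic (A t) (B t) * dc) / (B t - A t)^2 - 2 * Ival (A t) (B t) * (dc - da) / (B t - A t)^3)
           has_real_derivative QF (A t) (B t) da dc / (B t - A t)^4) (at t)"
proof -
  have r': "s0 < A t" "A t < s1" "s0 < B t" "B t < s1" using r by auto
  have D: "B t - A t \<noteq> 0" using r by simp
  have dD: "((\<lambda>t. B t - A t) has_real_derivative dc - da) (at t)" by (intro DERIV_diff dA dB)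
  have hI: "((\<lambda>t. Ival (A t) (B t)) has_real_derivative Ia (A t) (B t) * da + Ic (A t) (B t) * dc) (at t)"
    by (rule Ival_chain[OF dA dB r'])
  have hIa: "((\<lambda>t. Ia (A t) (B t)) has_real_derivative Iaa (A t) (B t) * da + Iac (A t) (B t) * dc) (at t)"
    by (rule Ia_chain[OF dA dB r'])
  have hIc: "((\<lambda>t. Ic (A t) (B t)) has_real_derivative Iac (A t) (B t) * da + Icc (A t) (B t) * dc) (at t)"
    by (rule Ic_chain[OF dA dB r'])
  show "((\<lambda>t. Ival (A t) (B t) / (B t - A t)^2) has_real_derivative
           (Ia (A t) (B t) * da + Ic (A t) (B t) * dc) / (B t - A t)^2 - 2 * Ival (A t) (B t) * (dc - da) / (B t - A t)^3) (at t)"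
    using quot2[where N="\<lambda>t. Ival (A t) (B t)" and Df="\<lambda>t. B t - A t", OF hI dD D] by simp
  have hN1: "((\<lambda>t. Ia (A t) (B t) * da + Ic (A t) (B t) * dc) has_real_derivative
      (Iaa (A t) (B t) * da + Iac (A t) (B t) * dc) * da + (Iac (A t) (B t) * da + Icc (A t) (B t) * dc) * dc) (at t)"
    by (intro DERIV_add DERIV_cmult_right hIa hIc) 
  have hN3: "((\<lambda>t. 2 * Ival (A t) (B t) * (dc - da)) has_real_derivative
      2 * (Ia (A t) (B t) * da + Ic (A t) (B t) * dc) * (dc - da)) (at t)"
    by (intro DERIV_cmult_right DERIV_cmult hI)
  have q2: "((\<lambda>t. (Ia (A t) (B t) * da + Ic (A t) (B t) * dc) / (B t - A t)^2) has_real_derivative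
      ((Iaa (A t) (B t) * da + Iac (A t) (B t) * dc) * da + (Iac (A t) (B t) * da + Icc (A t) (B t) * dc) * dc) / (B t - A t)^2
      - 2 * (Ia (A t) (B t) * da + Ic (A t) (B t) * dc) * (dc - da) / (B t - A t)^3) (at t)"
    by (rule quot2[where N="\<lambda>t. Ia (A t) (B t) * da + Ic (A t) (B t) * dc" and Df="\<lambda>t. B t - A t", OF hN1 dD D])
  have q3: "((\<lambda>t. 2 * Ival (A t) (B t) * (dc - da) / (B t - A t)^3) has_real_derivative
      2 * (Ia (A t) (B t) * da + Ic (A t) (B t) * dc) * (dc - da) / (B t - A t)^3
      - 3 * (2 * Ival (A t) (B t) * (dc - da)) * (dc - da) / (B t - A t)^4) (at t)"
    by (rule quot3[where N="\<lambda>t. 2 * Ival (A t) (B t) * (dc - da)" and Df="\<lambda>t. B t - A t", OF hN3 dD D])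
  have e: "((Iaa (A t) (B t) * da + Iac (A t) (B t) * dc) * da + (Iac (A t) (B t) * da + Icc (A t) (B t) * dc) * dc) / (B t - A t)^2
      - 2 * (Ia (A t) (B t) * da + Ic (A t) (B t) * dc) * (dc - da) / (B t - A t)^3
      - (2 * (Ia (A t) (B t) * da + Ic (A t) (B t) * dc) * (dc - da) / (B t - A t)^3
      - 3 * (2 * Ival (A t) (B t) * (dc - da)) * (dc - da) / (B t - A t)^4) = QF (A t) (B t) da dc / (B t - A t)^4"
    unfolding alg2[OF D] QF_alt ..
  show "((\<lambda>t. (Ia (A t) (B t) * da + Ic (A t) (B t) * dc) / (B t - A t)^2 - 2 * Ival (A t) (B t) * (dc - da) / (B t - A t)^3)
           has_real_derivative QF (A t) (B t) da dc / (B t - A t)^4) (at t)"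
    using DERIV_diff[OF q2 q3] unfolding e .
qed

end

context huber begin

lemma QF_pos:
  assumes "M11 a c > 0" "Mdet a c > 0" "da \<noteq> 0 \<or> dc \<noteq> 0"
  shows "QF a c da dc > 0"
proof -
  have id: "M11 a c * QF a c da dc = (M11 a c * da + M12 a c * dc)^2 + Mdet a c * dc^2"
    by (simp add: QF_def Mdet_def power2_eq_square algebra_simps)
  have "(M11 a c * da + M12 a c * dc)^2 + Mdet a c * dc^2 > 0"
  proof (cases "dc = 0")
    case True
    then have "da \<noteq> 0" using assms(3) by simp
    then show ?thesis using True assms(1) by simp
  next
    case False
    then have "Mdet a c * dc^2 > 0" using assms(2) by simp
    then show ?thesis by (simp add: add_nonneg_pos)
  qed
  then have "M11 a c * QF a c da dc > 0" unfolding id .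
  then show ?thesis using assms(1) by (simp add: zero_less_mult_iff)
qed

lemma main_loc: "\<exists>e>0. strict_convex_on (ball (F (-k1), 1 - F k2) e) (\<lambda>(a, b). sigma2 k1 k2 a b)"
proof -
  obtain e where e: "e > 0" and he: "\<And>p. dist p (P0, 1 - c0) < e \<Longrightarrow>
     s0 < fst p \<and> fst p < 1 - snd p \<and> 1 - snd p < s1 \<and>
     M11 (fst p) (1 - snd p) > 0 \<and> Mdet (fst p) (1 - snd p) > 0"
    using nbhd by blast
  let ?S = "ball (F (-k1), 1 - F k2) e"
  have S: "?S = ball (P0, 1 - c0) e" by (simp add: P0_def c0_def)
  have inS: "\<And>p. p \<in> ?S \<Longrightarrow> s0 < fst p \<and> fst p < 1 - snd p \<and> 1 - snd p < s1 \<and>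
     M11 (fst p) (1 - snd p) > 0 \<and> Mdet (fst p) (1 - snd p) > 0"
    using he unfolding S by (simp add: dist_commute)
  have sig: "sigma2 k1 k2 (fst p) (snd p) = Ival (fst p) (1 - snd p) / ((1 - snd p) - fst p)^2" if "p \<in> ?S" for p
    using sigma2_eq[of "fst p" "snd p"] inS[OF that] by (simp add: algebra_simps)
  have "strict_convex_on ?S (\<lambda>(a, b). sigma2 k1 k2 a b)"
    unfolding strict_convex_on_def
  proof (intro conjI convex_ball ballI impI allI)
    fix x y :: "real \<times> real" and u :: real
    assume x: "x \<in> ?S" and y: "y \<in> ?S" and xy: "x \<noteq> y" and u: "0 < u \<and> u < 1"
    define da where "da = fst x - fst y"
    define dc where "dc = snd y - snd x"
    define A where "A t = fst y + t * da" for t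
    define B where "B t = (1 - snd y) + t * dc" for t
    define G where "G t = Ival (A t) (B t) / (B t - A t)^2" for t
    define G1 where "G1 t = (Ia (A t) (B t) * da + Ic (A t) (B t) * dc) / (B t - A t)^2 - 2 * Ival (A t) (B t) * (dc - da) / (B t - A t)^3" for t
    define G2 where "G2 t = QF (A t) (B t) da dc / (B t - A t)^4" for t
    have dA: "\<And>t. (A has_real_derivative da) (at t)"
      unfolding A_def[abs_def] by (auto intro!: derivative_eq_intros)
    have dB: "\<And>t. (B has_real_derivative dc) (at t)"
      unfolding B_def[abs_def] by (auto intro!: derivative_eq_intros)
    have gam: "t *\<^sub>R x + (1 - t) *\<^sub>R y \<in> ?S" if "0 \<le> t" "t \<le> 1" for t
      using convexD[OF convex_ball x y, of t "1 - t"] that by simp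
    have gamc: "fst (t *\<^sub>R x + (1 - t) *\<^sub>R y) = A t" "1 - snd (t *\<^sub>R x + (1 - t) *\<^sub>R y) = B t" for t
      by (simp_all add: A_def B_def da_def dc_def algebra_simps)
    have cond: "s0 < A t \<and> A t < B t \<and> B t < s1 \<and> M11 (A t) (B t) > 0 \<and> Mdet (A t) (B t) > 0"
      if "0 \<le> t" "t \<le> 1" for t
      using inS[OF gam[OF that]] unfolding gamc .
    have sigG: "sigma2 k1 k2 (fst (t *\<^sub>R x + (1 - t) *\<^sub>R y)) (snd (t *\<^sub>R x + (1 - t) *\<^sub>R y)) = G t"
      if "0 \<le> t" "t \<le> 1" for t
    proof -
      have "sigma2 k1 k2 (fst (t *\<^sub>R x + (1 - t) *\<^sub>R y)) (snd (t *\<^sub>R x + (1 - t) *\<^sub>R y))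
          = Ival (A t) (B t) / (B t - A t)^2"
        using sig[OF gam[OF that]] unfolding gamc .
      then show ?thesis by (simp add: G_def)
    qed
    have d1: "(G has_real_derivative G1 t) (at t)" if "0 \<le> t" "t \<le> 1" for t
      unfolding G_def[abs_def] G1_def using seg_derivs(1)[OF dA dB] cond[OF that] by blast
    have d2: "(G1 has_real_derivative G2 t) (at t)" if "0 \<le> t" "t \<le> 1" for t
      unfolding G1_def[abs_def] G2_def using seg_derivs(2)[OF dA dB] cond[OF that] by blast
    have nz: "da \<noteq> 0 \<or> dc \<noteq> 0" using xy by (auto simp: da_def dc_def prod_eq_iff)
    have pos: "G2 t > 0" if "0 \<le> t" "t \<le> 1" for t
    proof -
      have "QF (A t) (B t) da dc > 0" using QF_pos cond[OF that] nz by blast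
      moreover have "(B t - A t)^4 > 0" using cond[OF that] by simp
      ultimately show ?thesis by (simp add: G2_def)
    qed
    have "G u < u * G 1 + (1 - u) * G 0"
      by (rule strict_1d[OF d1 d2 pos]) (use u in auto)
    moreover have "(\<lambda>(a, b). sigma2 k1 k2 a b) (u *\<^sub>R x + (1 - u) *\<^sub>R y) = G u"
      using sigG[of u] u by (simp add: case_prod_beta)
    moreover have "(\<lambda>(a, b). sigma2 k1 k2 a b) x = G 1"
      using sigG[of 1] by (simp add: case_prod_beta)
    moreover have "(\<lambda>(a, b). sigma2 k1 k2 a b) y = G 0"
      using sigG[of 0] by (simp add: case_prod_beta)
    ultimately show "(\<lambda>(a, b). sigma2 k1 k2 a b) (u *\<^sub>R x + (1 - u) *\<^sub>R y)
        < u * (\<lambda>(a, b). sigma2 k1 k2 a b) x + (1 - u) * (\<lambda>(a, b). sigma2 k1 k2 a b) y" by simp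
  qed
  with e show ?thesis by blast
qed

end

theorem mainTheorem7:
  fixes k1 k2 :: real
  assumes "k1 > 0" and "k2 > 0"
  shows "\<exists>e>0. strict_convex_on
           (ball (cdf k1 k2 (- k1), 1 - cdf k1 k2 k2) e)
           (\<lambda>(a, b). sigma2 k1 k2 a b)"
proof -
  interpret huber k1 k2 using assms by unfold_locales
  show ?thesis by (rule main_loc)
qed

end
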